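(* Let $n>1$ be an integer. (1) If $n$ is $2$-$T_0T^\ast$-perfect then $n=p_1^3$ for some prime $p_1$; (2) if $n$ is $3$-$T_0T^\ast$-perfect then $n=p_1^5$; (3) if $n$ is $4$-$T_0T^\ast$-perfect then $n=p_1^7$; (4) if $n$ is $5$-$T_0T^\ast$-perfect then $n=p_1^9$; (5) if $n$ is $6$-$T_0T^\ast$-perfect then $n=p_1^{11}$; (6) if $n$ is $7$-$T_0T^\ast$-perfect then $n=p_1^{13}$; (7) if $n$ is $8$-$T_0T^\ast$-perfect then $n=p_1^{15}$; (8) if $n$ is $9$-$T_0T^\ast$-perfect then $n=p_1^{17}$ or $n=p_1p_2$ for distinct primes $p_1,p_2$; (9) if $n$ is $10$-$T_0T^\ast$-perfect then $n=p_1^{19}$; where in each case $p_1$ is a prime.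
   Context: For a positive integer $m$, $T(m)$ denotes the product of all positive divisors of $m$, and $T^\ast(m)$ the product of all unitary divisors of $m$ (divisors $d$ with $\gcd(d,m/d)=1$). For an integer $k\ge 2$, an integer $n>1$ is called $k$-$T_0T^\ast$-perfect if $T(T^\ast(n))=n^k$. *)

theory Defs
  imports "HOL-Computational_Algebra.Primes"
begin

definition divisor_prod :: "nat \<Rightarrow> nat" where
  "divisor_prod m = (\<Prod>d\<in>{d. d dvd m}. d)"

definition unitary_divisor_prod :: "nat \<Rightarrow> nat" where
  "unitary_divisor_prod m = (\<Prod>d\<in>{d. d dvd m \<and> coprime d (m div d)}. d)"

definition k_T0Tstar_perfect :: "nat \<Rightarrow> nat \<Rightarrow> bool" where
  "k_T0Tstar_perfect k n \<longleftrightarrow> n > 1 \<and> divisor_prod (unitary_divisor_prod n) = n ^ k"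

end

theory Submission
  imports Defs
begin


lemma div_div_dvd: "(x::nat) dvd m \<Longrightarrow> m > 0 \<Longrightarrow> m div (m div x) = x"
proof -
  assume a: "x dvd m" "m > 0"
  hence "m div x \<noteq> 0" by (auto elim!: dvdE)
  moreover have "m = x * (m div x)" using a by simp
  ultimately show ?thesis by (metis nonzero_mult_div_cancel_right)
qed

lemma prod_div_pair:
  fixes m :: nat and S :: "nat set"
  assumes "finite S" "\<And>d. d \<in> S \<Longrightarrow> d dvd m \<and> (m div d) \<in> S" "m > 0"
  shows "(\<Prod>d\<in>S. d) ^ 2 = m ^ card S"
proof -
  have inj: "inj_on (\<lambda>d. m div d) S"
  proof (rule inj_onI)
    fix x y assume "x \<in> S" "y \<in> S" "m div x = m div y"
    then show "x = y" using assms(2,3) div_div_dvd by metis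
  qed
  have img: "(\<lambda>d. m div d) ` S = S"
  proof
    show "(\<lambda>d. m div d) ` S \<subseteq> S" using assms(2) by auto
    show "S \<subseteq> (\<lambda>d. m div d) ` S"
    proof
      fix x assume "x \<in> S"
      hence "m div (m div x) = x" using assms div_div_dvd by blast
      thus "x \<in> (\<lambda>d. m div d) ` S" using assms(2) \<open>x \<in> S\<close> by (metis image_eqI)
    qed
  qed
  have "(\<Prod>d\<in>S. m div d) = (\<Prod>d\<in>S. d)"
    using prod.reindex[OF inj, of id] img by simp
  hence "(\<Prod>d\<in>S. d) ^ 2 = (\<Prod>d\<in>S. d) * (\<Prod>d\<in>S. m div d)" by (simp add: power2_eq_square)
  also have "\<dots> = (\<Prod>d\<in>S. d * (m div d))" by (simp add: prod.distrib)
  also have "\<dots> = (\<Prod>d\<in>S. m)" using assms(2) by (intro prod.cong) auto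
  finally show ?thesis by simp
qed

lemma T_sq: "m > 0 \<Longrightarrow> divisor_prod m ^ 2 = m ^ card {d. d dvd m}"
  unfolding divisor_prod_def
  by (rule prod_div_pair) (auto simp: div_dvd_div)

lemma Tu_sq: "m > 0 \<Longrightarrow> unitary_divisor_prod m ^ 2 = m ^ card {d. d dvd m \<and> coprime d (m div d)}"
  unfolding unitary_divisor_prod_def
  apply (rule prod_div_pair)
    apply simp
   apply (auto simp: div_div_dvd coprime_commute)
  done

definition tau :: "nat \<Rightarrow> nat" where "tau m = card {d. d dvd m}"
definition UD :: "nat \<Rightarrow> nat set" where "UD m = {d. d dvd m \<and> coprime d (m div d)}"

lemma cop1: "coprime (x::nat) y \<Longrightarrow> e dvd y \<Longrightarrow> coprime e x"
  by (metis coprime_commute coprime_divisors gcd_nat.refl)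
lemma gcd1: "coprime (e::nat) x \<Longrightarrow> d dvd x \<Longrightarrow> gcd (d*e) x = d"
  by (simp add: coprime_commute gcd_mult_left_right_cancel)
lemma divdiv: "d dvd (x::nat) \<Longrightarrow> e dvd y \<Longrightarrow> x*y div (d*e) = (x div d) * (y div e)"
  by (simp add: div_mult_div_if_dvd)
lemma div_dvd_self: "d dvd (x::nat) \<Longrightarrow> x div d dvd x"
  by (metis dvd_mult_div_cancel dvd_triv_right)

lemma dvd_split_inj:
  fixes x y d e d' e' :: nat
  assumes "coprime x y" "d dvd x" "e dvd y" "d' dvd x" "e' dvd y" "d * e = d' * e'"
  shows "d = d' \<and> e = e'"
proof -
  have "gcd (d*e) x = d" using gcd1 cop1 assms by blast
  moreover have "gcd (d'*e') x = d'" using gcd1 cop1 assms by blast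
  moreover have "coprime y x" using assms(1) by (simp add: coprime_commute)
  hence "gcd (e*d) y = e" "gcd (e'*d') y = e'" using gcd1 cop1 assms by blast+
  ultimately show ?thesis using assms(6) by (metis mult.commute)
qed

lemma tau_mult:
  assumes "coprime x y" "x > 0" "y > 0"
  shows "tau (x*y) = tau x * tau y"
proof -
  have "bij_betw (\<lambda>(d,e). d*e) ({d. d dvd x} \<times> {e. e dvd y}) {d. d dvd x*y}"
  proof (rule bij_betwI')
    fix a b assume ab: "a \<in> {d. d dvd x} \<times> {e. e dvd y}" "b \<in> {d. d dvd x} \<times> {e. e dvd y}"
    obtain d e d' e' where de: "a = (d,e)" "b = (d',e')" by (cases a; cases b)
    have "d*e = d'*e' \<Longrightarrow> d = d' \<and> e = e'" using dvd_split_inj[OF assms(1)] ab de by auto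
    then show "((case a of (d, e) \<Rightarrow> d * e) = (case b of (d, e) \<Rightarrow> d * e)) = (a = b)"
      using de by auto
  next
    fix a assume "a \<in> {d. d dvd x} \<times> {e. e dvd y}"
    then show "(case a of (d, e) \<Rightarrow> d * e) \<in> {d. d dvd x * y}" by (auto intro: mult_dvd_mono)
  next
    fix z assume "z \<in> {d. d dvd x * y}"
    then obtain d e where "z = d*e" "d dvd x" "e dvd y" using division_decomp by blast
    then show "\<exists>a\<in>{d. d dvd x} \<times> {e. e dvd y}. z = (case a of (d, e) \<Rightarrow> d * e)" by auto
  qed
  hence "card {d. d dvd x*y} = card ({d. d dvd x} \<times> {e. e dvd y})" by (simp add: bij_betw_same_card)
  thus ?thesis unfolding tau_def by (simp add: card_cartesian_product)
qed
lemma UD_mult: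
  assumes "coprime x y" "x > 0" "y > 0"
  shows "card (UD (x*y)) = card (UD x) * card (UD y)"
proof -
  have "bij_betw (\<lambda>(d,e). d*e) (UD x \<times> UD y) (UD (x*y))"
  proof (rule bij_betwI')
    fix a b assume ab: "a \<in> UD x \<times> UD y" "b \<in> UD x \<times> UD y"
    obtain d e d' e' where de: "a = (d,e)" "b = (d',e')" by (cases a; cases b)
    have "d*e = d'*e' \<Longrightarrow> d = d' \<and> e = e'" using dvd_split_inj[OF assms(1)] ab de unfolding UD_def by auto
    then show "((case a of (d, e) \<Rightarrow> d * e) = (case b of (d, e) \<Rightarrow> d * e)) = (a = b)"
      using de by auto
  next
    fix a assume "a \<in> UD x \<times> UD y"
    then obtain d e where a: "a = (d,e)" "d dvd x" "e dvd y" "coprime d (x div d)" "coprime e (y div e)"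
      unfolding UD_def by auto
    have q: "x*y div (d*e) = (x div d) * (y div e)" using a divdiv by blast
    have "coprime d (y div e)" using assms(1) a(2) div_dvd_self[OF a(3)] coprime_divisors
      by blast
    moreover have "coprime e (x div d)" using assms(1) a(3) div_dvd_self[OF a(2)] coprime_divisors coprime_commute
      by metis
    ultimately have "coprime (d*e) ((x div d) * (y div e))" using a by (auto simp: coprime_commute)
    then show "(case a of (d, e) \<Rightarrow> d * e) \<in> UD (x * y)" unfolding UD_def using a q by (auto intro: mult_dvd_mono)
  next
    fix z assume z: "z \<in> UD (x*y)"
    then obtain d e where de: "z = d*e" "d dvd x" "e dvd y" using division_decomp unfolding UD_def by blast
    have q: "x*y div (d*e) = (x div d) * (y div e)" using de divdiv by blast
    have c: "coprime (d*e) ((x div d) * (y div e))" using z de q unfolding UD_def by auto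
    hence "coprime d (x div d)" "coprime e (y div e)" by auto
    then show "\<exists>a\<in>UD x \<times> UD y. z = (case a of (d, e) \<Rightarrow> d * e)" using de unfolding UD_def by auto
  qed
  hence "card (UD (x*y)) = card (UD x \<times> UD y)" by (simp add: bij_betw_same_card)
  thus ?thesis by (simp add: card_cartesian_product)
qed
lemma tau_pp: "prime p \<Longrightarrow> tau (p^a) = a + 1"
proof -
  assume p: "prime p"
  have "{d. d dvd p^a} = (\<lambda>i. p^i) ` {0..a}" using divides_primepow_nat[OF p] by auto
  moreover have "inj_on (\<lambda>i. p^i) {0..a}" using p
    by (intro inj_onI) (metis power_inject_exp prime_gt_1_nat)
  ultimately show ?thesis unfolding tau_def by (simp add: card_image)
qed

lemma UD_pp: "prime p \<Longrightarrow> a \<ge> 1 \<Longrightarrow> UD (p^a) = {1, p^a}"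
proof -
  assume p: "prime p" and a: "a \<ge> 1"
  show ?thesis
  proof
    show "UD (p^a) \<subseteq> {1, p^a}"
    proof
      fix d assume "d \<in> UD (p^a)"
      then obtain i where i: "i \<le> a" "d = p^i" "coprime (p^i) (p^a div p^i)"
        unfolding UD_def using divides_primepow_nat[OF p] by auto
      have "p^a div p^i = p^(a-i)" using i(1) p by (simp add: power_diff prime_gt_0_nat)
      hence "coprime (p^i) (p^(a-i))" using i by simp
      hence "i = 0 \<or> a - i = 0" using p by (auto simp: coprime_power_left_iff coprime_power_right_iff)
      thus "d \<in> {1, p^a}" using i by auto
    qed
    show "{1, p^a} \<subseteq> UD (p^a)" using p unfolding UD_def by (auto simp: prime_gt_0_nat)
  qed
qed

lemma UD_pp_card: "prime p \<Longrightarrow> a \<ge> 1 \<Longrightarrow> card (UD (p^a)) = 2"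
proof -
  assume p: "prime p" and a: "a \<ge> 1"
  have "p^a > 1" using p a by (metis one_less_power prime_gt_1_nat not_one_le_zero zero_less_iff_neq_zero le_0_eq)
  thus ?thesis using UD_pp[OF p a] by simp
qed
lemma cop_prod: "finite F \<Longrightarrow> \<forall>q\<in>insert p F. prime q \<Longrightarrow> p \<notin> F \<Longrightarrow>
   coprime ((p::nat) ^ (e p)) (\<Prod>q\<in>F. q ^ (e q :: nat))"
proof -
  assume a: "finite F" "\<forall>q\<in>insert p F. prime q" "p \<notin> F"
  have "\<And>q. q \<in> F \<Longrightarrow> coprime (p ^ (e p)) (q ^ e q)"
  proof -
    fix q assume "q \<in> F"
    hence "p \<noteq> q" "prime p" "prime q" using a by auto
    hence "coprime p q" by (rule_tac primes_coprime) auto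
    thus "coprime (p ^ (e p)) (q ^ e q)" by simp
  qed
  thus ?thesis by (rule prod_coprime_right)
qed

lemma prod_pos: "\<forall>q\<in>F. prime q \<Longrightarrow> (\<Prod>q\<in>F. (q::nat) ^ (e q :: nat)) > (0::nat)"
  by (rule prod_pos) (auto simp: prime_gt_0_nat)

lemma tau_prod: "finite P \<Longrightarrow> \<forall>q\<in>P. prime q \<Longrightarrow> tau (\<Prod>q\<in>P. q ^ e q) = (\<Prod>q\<in>P. e q + 1)"
proof (induction P rule: finite_induct)
  case empty then show ?case by (simp add: tau_def)
next
  case (insert p F)
  have "tau (\<Prod>q\<in>insert p F. q ^ e q) = tau (p ^ e p * (\<Prod>q\<in>F. q ^ e q))" using insert by simp
  also have "\<dots> = tau (p ^ e p) * tau (\<Prod>q\<in>F. q ^ e q)"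
    using insert cop_prod[of F p e] prod_pos[of F e] by (intro tau_mult) (auto simp: prime_gt_0_nat)
  also have "\<dots> = (e p + 1) * (\<Prod>q\<in>F. e q + 1)" using insert tau_pp by simp
  finally show ?case using insert by simp
qed

lemma UD_prod: "finite P \<Longrightarrow> \<forall>q\<in>P. prime q \<and> e q \<ge> 1 \<Longrightarrow> card (UD (\<Prod>q\<in>P. q ^ e q)) = 2 ^ card P"
proof (induction P rule: finite_induct)
  case empty
  have "UD 1 = {1}" unfolding UD_def by auto
  then show ?case by simp
next
  case (insert p F)
  have "card (UD (\<Prod>q\<in>insert p F. q ^ e q)) = card (UD (p ^ e p * (\<Prod>q\<in>F. q ^ e q)))" using insert by simp
  also have "\<dots> = card (UD (p ^ e p)) * card (UD (\<Prod>q\<in>F. q ^ e q))"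
    using insert cop_prod[of F p e] prod_pos[of F e] by (intro UD_mult) (auto simp: prime_gt_0_nat)
  also have "\<dots> = 2 * 2 ^ card F" using insert UD_pp_card by simp
  finally show ?case using insert by simp
qed
lemma prime_factors_power': "n > 0 \<Longrightarrow> prime_factors ((x::nat) ^ n) = prime_factors x"
  by (cases "x = 0"; cases "n = 0")
     (auto simp: prime_factors_multiplicity prime_elem_multiplicity_power_distrib zero_power)

lemma key:
  fixes n k :: nat
  assumes n: "n > 1" and h: "divisor_prod (unitary_divisor_prod n) = n ^ k"
  defines "P \<equiv> prime_factors n"
  shows "4 * k = 2 ^ card P * (\<Prod>p\<in>P. 2 ^ (card P - 1) * multiplicity p n + 1)"
    and "card P \<ge> 1"
proof -
  define m where "m = unitary_divisor_prod n"
  define s where "s = card P"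
  define u where "u = card (UD n)"
  have n0: "n > 0" using n by simp
  have nfac: "n = (\<Prod>p\<in>P. p ^ multiplicity p n)" using prime_factorization_nat[OF n0] P_def by simp
  have fin: "finite P" unfolding P_def by simp
  have Pm: "\<forall>q\<in>P. prime q \<and> multiplicity q n \<ge> 1" unfolding P_def
    by (auto simp: prime_factors_multiplicity)
  have u: "u = 2 ^ s" unfolding u_def s_def using UD_prod[OF fin Pm] nfac by simp
  have "P \<noteq> {}" using n nfac by (metis less_irrefl prod.empty)
  hence s1: "s \<ge> 1" unfolding s_def using fin by (simp add: Suc_le_eq card_gt_0_iff)
  thus "card P \<ge> 1" unfolding s_def .
  have mu: "m ^ 2 = n ^ u" unfolding m_def u_def UD_def using Tu_sq[OF n0] by simp
  have m0: "m > 0" using mu n0 by (metis gr0I power_not_zero zero_less_power zero_power2 not_less0)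
  have tm: "divisor_prod m ^ 2 = m ^ tau m" using T_sq[OF m0] tau_def by simp
  have "n ^ (4*k) = ((n^k)^2)^2" by (simp add: power_mult[symmetric])
  also have "\<dots> = (m ^ tau m)^2" using h tm m_def by simp
  also have "\<dots> = (m^2) ^ tau m" by (simp add: power_mult[symmetric] mult.commute)
  also have "\<dots> = n ^ (u * tau m)" using mu by (simp add: power_mult)
  finally have e1: "4 * k = u * tau m" using n by (simp add: power_inject_exp)
  have upos: "u > 0" using u by simp
  have pfm: "prime_factors m = P"
  proof -
    have "prime_factors m = prime_factors (m^2)" by (simp add: prime_factors_power')
    also have "\<dots> = prime_factors (n^u)" using mu by simp
    also have "\<dots> = P" using upos P_def by (simp add: prime_factors_power')
    finally show ?thesis .
  qed
  have mult: "multiplicity p m = 2 ^ (s-1) * multiplicity p n" if "p \<in> P" for p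
  proof -
    have pp: "prime p" using that Pm by auto
    have "2 * multiplicity p m = multiplicity p (m^2)"
      using pp m0 by (simp add: prime_elem_multiplicity_power_distrib)
    also have "\<dots> = multiplicity p (n^u)" using mu by simp
    also have "\<dots> = u * multiplicity p n" using pp n0 by (simp add: prime_elem_multiplicity_power_distrib)
    also have "\<dots> = 2 * (2 ^ (s-1) * multiplicity p n)" using u s1
      by (metis (no_types, lifting) Suc_diff_le diff_Suc_1 mult.assoc power_Suc)
    finally show ?thesis by simp
  qed
  have mfac: "m = (\<Prod>p\<in>P. p ^ multiplicity p m)" using prime_factorization_nat[OF m0] pfm by simp
  have "tau m = (\<Prod>p\<in>P. multiplicity p m + 1)"
    using tau_prod[OF fin, of "\<lambda>p. multiplicity p m"] Pm mfac by simp
  also have "\<dots> = (\<Prod>p\<in>P. 2 ^ (s-1) * multiplicity p n + 1)" using mult by (intro prod.cong) auto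
  finally show "4 * k = 2 ^ card P * (\<Prod>p\<in>P. 2 ^ (card P - 1) * multiplicity p n + 1)"
    using e1 u s_def by simp
qed
lemma final:
  fixes n k :: nat
  assumes n: "n > 1" and h: "divisor_prod (unitary_divisor_prod n) = n ^ k" and k: "k \<le> 10"
  shows "(\<exists>p. prime p \<and> n = p^(2*k-1)) \<or> (k = 9 \<and> (\<exists>p q. prime p \<and> prime q \<and> p\<noteq>q \<and> n=p*q))"
proof -
  define P where "P = prime_factors n"
  define a where "a = (\<lambda>p. multiplicity p n)"
  have e: "4 * k = 2 ^ card P * (\<Prod>p\<in>P. 2 ^ (card P - 1) * a p + 1)"
    using key(1)[OF n h] unfolding P_def a_def .
  have s1: "card P \<ge> 1" using key(2)[OF n h] unfolding P_def .
  have n0: "n > 0" using n by simp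
  have nfac: "n = (\<Prod>p\<in>P. p ^ a p)" using prime_factorization_nat[OF n0] P_def a_def by simp
  have fin: "finite P" unfolding P_def by simp
  have Pm: "\<forall>q\<in>P. prime q \<and> a q \<ge> 1" unfolding P_def a_def
    by (auto simp: prime_factors_multiplicity)
  consider "card P = 1" | "card P = 2" | "card P \<ge> 3" using s1 by linarith
  then show ?thesis
  proof cases
    case 1
    then obtain p where p: "P = {p}" using card_1_singletonE by blast
    have "4 * k = 2 * (a p + 1)" using e p by simp
    hence "a p = 2*k - 1" by simp
    moreover have "n = p ^ a p" using nfac p by simp
    ultimately show ?thesis using Pm p by auto
  next
    case 2
    then obtain p q where pq: "P = {p, q}" "p \<noteq> q" by (auto simp: card_2_iff)
    have "4 * k = 4 * ((2 * a p + 1) * (2 * a q + 1))" using e pq 2 by simp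
    hence kk: "k = (2 * a p + 1) * (2 * a q + 1)" by simp
    have ap: "a p \<ge> 1" "a q \<ge> 1" using Pm pq by auto
    have "a p = 1"
    proof (rule ccontr)
      assume "a p \<noteq> 1" hence "2 * a p + 1 \<ge> 5" using ap by simp
      moreover have "2 * a q + 1 \<ge> 3" using ap by simp
      ultimately have "k \<ge> 5 * 3" unfolding kk by (metis mult_le_mono mult.commute)
      thus False using k by simp
    qed
    moreover have "a q = 1"
    proof (rule ccontr)
      assume "a q \<noteq> 1" hence "2 * a q + 1 \<ge> 5" using ap by simp
      moreover have "2 * a p + 1 \<ge> 3" using ap by simp
      ultimately have "k \<ge> 5 * 3" unfolding kk by (metis mult_le_mono mult.commute)
      thus False using k by simp
    qed
    ultimately have "k = 9" "n = p * q" using kk nfac pq by auto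
    thus ?thesis using Pm pq by auto
  next
    case 3
    have X: "(\<Prod>p\<in>P. (5::nat)) \<le> (\<Prod>p\<in>P. 2 ^ (card P - 1) * a p + 1)"
    proof (rule prod_mono)
      fix p assume "p \<in> P"
      have "(2::nat)^2 \<le> 2 ^ (card P - 1)" by (rule power_increasing) (use 3 in auto)
      hence "(4::nat) \<le> 2 ^ (card P - 1)" by simp
      moreover have "a p \<ge> 1" using Pm \<open>p \<in> P\<close> by auto
      ultimately have "4 * 1 \<le> 2 ^ (card P - 1) * a p" by (rule mult_le_mono)
      thus "0 \<le> (5::nat) \<and> 5 \<le> 2 ^ (card P - 1) * a p + 1" by simp
    qed
    have "(5::nat)^3 \<le> 5 ^ card P" by (rule power_increasing) (use 3 in auto)
    hence Y: "125 \<le> (\<Prod>p\<in>P. 2 ^ (card P - 1) * a p + 1)" using X by simp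
    have "(2::nat)^3 \<le> 2 ^ card P" by (rule power_increasing) (use 3 in auto)
    hence Z: "8 \<le> (2::nat) ^ card P" by simp
    have "8 * 125 \<le> 4 * k" unfolding e using mult_le_mono[OF Z Y] .
    thus ?thesis using k by simp
  qed
qed

theorem mainTheorem6:
  fixes n :: nat
  assumes "n > 1"
  shows "(k_T0Tstar_perfect 2 n \<longrightarrow> (\<exists>p. prime p \<and> n = p ^ 3))
    \<and> (k_T0Tstar_perfect 3 n \<longrightarrow> (\<exists>p. prime p \<and> n = p ^ 5))
    \<and> (k_T0Tstar_perfect 4 n \<longrightarrow> (\<exists>p. prime p \<and> n = p ^ 7))
    \<and> (k_T0Tstar_perfect 5 n \<longrightarrow> (\<exists>p. prime p \<and> n = p ^ 9))
    \<and> (k_T0Tstar_perfect 6 n \<longrightarrow> (\<exists>p. prime p \<and> n = p ^ 11))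
    \<and> (k_T0Tstar_perfect 7 n \<longrightarrow> (\<exists>p. prime p \<and> n = p ^ 13))
    \<and> (k_T0Tstar_perfect 8 n \<longrightarrow> (\<exists>p. prime p \<and> n = p ^ 15))
    \<and> (k_T0Tstar_perfect 9 n \<longrightarrow>
         (\<exists>p. prime p \<and> n = p ^ 17) \<or> (\<exists>p q. prime p \<and> prime q \<and> p \<noteq> q \<and> n = p * q))
    \<and> (k_T0Tstar_perfect 10 n \<longrightarrow> (\<exists>p. prime p \<and> n = p ^ 19))"
  proof -
  have F: "k_T0Tstar_perfect k n \<Longrightarrow> k \<le> 10 \<Longrightarrow> (\<exists>p. prime p \<and> n = p^(2*k-1)) \<or> (k = 9 \<and> (\<exists>p q. prime p \<and> prime q \<and> p\<noteq>q \<and> n=p*q))" for k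
    unfolding k_T0Tstar_perfect_def using final assms by blast
  show ?thesis
    using F[of 2] F[of 3] F[of 4] F[of 5] F[of 6] F[of 7] F[of 8] F[of 9] F[of 10] by simp
qed

end
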